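(* Let $\overline{n}=(n_1,\ldots,n_r)$ with $1\le n_1\le\cdots\le n_r$. Then $\mathrm{cat}(\mathrm{P}_{\overline{n}})<(n_1+1)\,r$.
   Context: $\mathrm{P}_{\overline{n}}$ is the quotient of $S^{n_1}\times\cdots\times S^{n_r}$ by the diagonal $\mathbb{Z}_2$-action which is antipodal on each factor. $\mathrm{cat}$ denotes the reduced Lusternik–Schnirelmann category: one less than the minimal number of open sets covering the space, each contractible in the space (so a contractible space has $\mathrm{cat}=0$). *)

theory Defs
  imports "HOL-Analysis.Analysis"
begin

definition quotient_topology :: "'a topology \<Rightarrow> ('a \<Rightarrow> 'b) \<Rightarrow> 'b topology" where
  "quotient_topology X f =
     topology (\<lambda>U. U \<subseteq> f ` topspace X \<and> openin X {x \<in> topspace X. f x \<in> U})"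

definition sphere_product :: "nat list \<Rightarrow> (nat \<Rightarrow> nat \<Rightarrow> real) topology" where
  "sphere_product ns = product_topology (\<lambda>k. nsphere (ns ! k)) {..<length ns}"

definition diag_antipodal :: "nat list \<Rightarrow> (nat \<Rightarrow> nat \<Rightarrow> real) \<Rightarrow> (nat \<Rightarrow> nat \<Rightarrow> real)" where
  "diag_antipodal ns x = restrict (\<lambda>k. - x k) {..<length ns}"

definition projective_product :: "nat list \<Rightarrow> (nat \<Rightarrow> nat \<Rightarrow> real) set topology" where
  "projective_product ns =
     quotient_topology (sphere_product ns) (\<lambda>x. {x, diag_antipodal ns x})"

definition contractible_in :: "'a topology \<Rightarrow> 'a set \<Rightarrow> bool" where
  "contractible_in X U \<longleftrightarrow>
     (\<exists>a. homotopic_with (\<lambda>_. True) (subtopology X U) X id (\<lambda>_. a))"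

definition LS_cover :: "'a topology \<Rightarrow> nat \<Rightarrow> bool" where
  "LS_cover X k \<longleftrightarrow>
     (\<exists>U :: nat \<Rightarrow> 'a set. (\<forall>i\<le>k. openin X (U i) \<and> contractible_in X (U i)) \<and>
        topspace X \<subseteq> (\<Union>i\<le>k. U i))"

text \<open>Reduced Lusternik-Schnirelmann category (infinity if no finite cover exists).\<close>
definition LS_cat :: "'a topology \<Rightarrow> enat" where
  "LS_cat X = (if \<exists>k. LS_cover X k then enat (LEAST k. LS_cover X k) else \<infinity>)"

end

theory Submission
  imports Defs
begin

lemma istop_quot: "istopology (\<lambda>U. U \<subseteq> f ` topspace X \<and> openin X {x \<in> topspace X. f x \<in> U})"
  unfolding istopology_def
proof (rule conjI; intro allI impI)
  fix S T assume S: "S \<subseteq> f ` topspace X \<and> openin X {x \<in> topspace X. f x \<in> S}"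
     and T: "T \<subseteq> f ` topspace X \<and> openin X {x \<in> topspace X. f x \<in> T}"
  have "{x \<in> topspace X. f x \<in> S \<inter> T} = {x \<in> topspace X. f x \<in> S} \<inter> {x \<in> topspace X. f x \<in> T}" (is "_ = ?I") by auto
  moreover have "openin X ({x \<in> topspace X. f x \<in> S} \<inter> {x \<in> topspace X. f x \<in> T})"
    using S T by (intro openin_Int) auto
  ultimately show "S \<inter> T \<subseteq> f ` topspace X \<and> openin X {x \<in> topspace X. f x \<in> S \<inter> T}"
    using S by (metis inf.coboundedI1)
next
  fix K assume K: "\<forall>S\<in>K. S \<subseteq> f ` topspace X \<and> openin X {x \<in> topspace X. f x \<in> S}"
  have "{x \<in> topspace X. f x \<in> \<Union>K} = \<Union>((\<lambda>S. {x \<in> topspace X. f x \<in> S}) ` K)" by auto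
  moreover have "openin X (\<Union>((\<lambda>S. {x \<in> topspace X. f x \<in> S}) ` K))"
    using K by (intro openin_Union) auto
  ultimately show "\<Union>K \<subseteq> f ` topspace X \<and> openin X {x \<in> topspace X. f x \<in> \<Union>K}"
    using K by auto
qed

lemma openin_quot: "openin (quotient_topology X f) U \<longleftrightarrow> U \<subseteq> f ` topspace X \<and> openin X {x \<in> topspace X. f x \<in> U}"
  unfolding quotient_topology_def by (simp add: topology_inverse'[OF istop_quot])

lemma topspace_quot: "topspace (quotient_topology X f) = f ` topspace X"
proof -
  have "openin (quotient_topology X f) (f ` topspace X)"
    unfolding openin_quot by (simp add: Collect_mem_eq[of "topspace X"] cong: conj_cong)
  then have "f ` topspace X \<subseteq> topspace (quotient_topology X f)" by (rule openin_subset[THEN subset_trans[OF order_refl]])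
  moreover have "topspace (quotient_topology X f) \<subseteq> f ` topspace X"
    using openin_quot[of X f "topspace (quotient_topology X f)"] by auto
  ultimately show ?thesis by auto
qed

lemma cont_quot: "continuous_map X (quotient_topology X f) f"
  unfolding continuous_map_def topspace_quot
proof (intro conjI allI impI)
  show "f \<in> topspace X \<rightarrow> f ` topspace X" by auto
  fix U assume "openin (quotient_topology X f) U"
  then show "openin X {x \<in> topspace X. f x \<in> U}" by (simp add: openin_quot)
qed

definition nrm :: "nat \<Rightarrow> (nat\<Rightarrow>real) \<Rightarrow> nat \<Rightarrow> real" where
  "nrm n v = (\<lambda>l. v l / sqrt (\<Sum>m\<le>n. (v m)^2))"

definition hom1 :: "nat \<Rightarrow> (nat\<Rightarrow>real) \<Rightarrow> real \<times> (nat \<Rightarrow> real) \<Rightarrow> nat \<Rightarrow> real" where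
  "hom1 n c p = nrm n (\<lambda>l. (1 - fst p) * snd p l + fst p * c l)"

lemma topspace_nsphere: "topspace (nsphere n) = {x. (\<Sum>i\<le>n. x i ^ 2) = 1 \<and> (\<forall>i>n. x i = 0)}"
  by (simp add: nsphere)

lemma pos_sum:
  assumes y: "y \<in> topspace (nsphere n)" and c: "c \<in> topspace (nsphere n)" and yc: "y \<noteq> - c"
    and t: "0 \<le> t" "t \<le> 1"
  shows "(\<Sum>m\<le>n. ((1-t)*y m + t*c m)^2) > 0"
proof (rule ccontr)
  assume "\<not> ?thesis"
  then have "(\<Sum>m\<le>n. ((1-t)*y m + t*c m)^2) = 0"
    by (metis (no_types, lifting) antisym_conv2 sum_nonneg zero_le_power2)
  then have z: "\<forall>m\<in>{..n}. ((1-t)*y m + t*c m)^2 = 0"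
    by (subst sum_nonneg_eq_0_iff[symmetric]) auto
  then have z2: "\<And>m. m \<le> n \<Longrightarrow> (1-t)*y m = - (t*c m)" by (simp add: add_eq_0_iff)
  have "(\<Sum>m\<le>n. ((1-t)*y m)^2) = (\<Sum>m\<le>n. (t*c m)^2)"
    by (rule sum.cong) (auto simp: z2)
  then have "(1-t)^2 * (\<Sum>m\<le>n. (y m)^2) = t^2 * (\<Sum>m\<le>n. (c m)^2)"
    by (simp add: power_mult_distrib sum_distrib_left)
  then have "(1-t)^2 = t^2" using y c by (simp add: topspace_nsphere)
  then have th: "t = 1/2" by (simp add: power2_eq_square algebra_simps)
  have "y = - c"
  proof
    fix m show "y m = (- c) m"
    proof (cases "m \<le> n")
      case True then show ?thesis using z2[OF True] th by simp
    next
      case False then show ?thesis using y c by (simp add: topspace_nsphere)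
    qed
  qed
  with yc show False by simp
qed

lemma hom1_in:
  assumes y: "y \<in> topspace (nsphere n)" and c: "c \<in> topspace (nsphere n)" and yc: "y \<noteq> - c"
    and t: "0 \<le> t" "t \<le> 1"
  shows "hom1 n c (t,y) \<in> topspace (nsphere n)"
proof -
  define s where "s = (\<Sum>m\<le>n. ((1-t)*y m + t*c m)^2)"
  have s: "s > 0" using pos_sum[OF assms] by (simp add: s_def)
  have "(\<Sum>i\<le>n. (((1-t)*y i + t*c i) / sqrt s)^2) = (\<Sum>i\<le>n. ((1-t)*y i + t*c i)^2) / s"
    using s by (simp add: power_divide sum_divide_distrib)
  also have "\<dots> = 1" using s by (simp add: s_def)
  finally show ?thesis using y c
    by (simp add: topspace_nsphere hom1_def nrm_def s_def)
qed

lemma hom1_0: "y \<in> topspace (nsphere n) \<Longrightarrow> hom1 n c (0,y) = y"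
  by (simp add: topspace_nsphere hom1_def nrm_def)

lemma hom1_1: "c \<in> topspace (nsphere n) \<Longrightarrow> hom1 n c (1,y) = c"
  by (simp add: topspace_nsphere hom1_def nrm_def)

lemma into_nsphere:
  "continuous_map Z (powertop_real UNIV) f \<Longrightarrow> f \<in> topspace Z \<rightarrow> topspace (nsphere n) \<Longrightarrow> continuous_map Z (nsphere n) f"
  unfolding nsphere by (simp add: continuous_map_in_subtopology)

lemma cont_hom1:
  assumes c: "c \<in> topspace (nsphere n)" and T: "T \<subseteq> {y. y \<noteq> - c}"
  shows "continuous_map (prod_topology (top_of_set {0..1}) (subtopology (nsphere n) T)) (nsphere n) (hom1 n c)"
proof -
  let ?Z = "prod_topology (top_of_set {0..1::real}) (subtopology (nsphere n) T)"
  have pr: "continuous_map ?Z euclideanreal (\<lambda>p. snd p m)" for m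
    using continuous_map_compose[OF continuous_map_snd continuous_map_from_subtopology[OF continuous_map_nsphere_projection]]
    by (simp add: o_def)
  have fs: "continuous_map ?Z euclideanreal fst"
    using continuous_map_into_fulltopology[OF continuous_map_fst] by blast
  have nz: "sqrt (\<Sum>m\<le>n. ((1 - fst p) * snd p m + fst p * c m)^2) \<noteq> 0" if "p \<in> topspace ?Z" for p
    using that pos_sum[OF _ c, of "snd p" "fst p"] T by (auto simp: topspace_prod_topology)
  have "continuous_map ?Z (powertop_real UNIV) (hom1 n c)"
    unfolding continuous_map_componentwise_UNIV hom1_def nrm_def
    by (intro allI continuous_map_real_divide continuous_intros pr fs nz) (simp_all add: continuous_map_const)
  moreover have "hom1 n c \<in> topspace ?Z \<rightarrow> topspace (nsphere n)"
  proof (rule Pi_I)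
    fix p assume "p \<in> topspace ?Z"
    then obtain t y where p: "p = (t,y)" "t\<in>{0..1}" "y \<in> topspace (nsphere n)" "y \<in> T"
      by (cases p) (simp add: topspace_prod_topology)
    then show "hom1 n c p \<in> topspace (nsphere n)" using hom1_in[OF p(3) c] T by auto
  qed
  ultimately show ?thesis by (rule into_nsphere)
qed

lemma topspace_SP: "topspace (sphere_product ns) = (\<Pi>\<^sub>E i\<in>{..<length ns}. topspace (nsphere (ns!i)))"
  by (simp add: sphere_product_def)

lemma coord: "k < length ns \<Longrightarrow> continuous_map (sphere_product ns) euclideanreal (\<lambda>x. x k l)"
  unfolding sphere_product_def
  using continuous_map_compose[OF continuous_map_product_projection[of k "{..<length ns}" "\<lambda>k. nsphere (ns!k)"] continuous_map_nsphere_projection[of "ns!k" l]]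
  by (simp add: o_def)

lemma neg_in: "x \<in> topspace (sphere_product ns) \<Longrightarrow> diag_antipodal ns x \<in> topspace (sphere_product ns)"
  by (auto simp: topspace_SP diag_antipodal_def topspace_nsphere PiE_iff)

lemma neg_neg: "x \<in> topspace (sphere_product ns) \<Longrightarrow> diag_antipodal ns (diag_antipodal ns x) = x"
  by (auto simp: topspace_SP diag_antipodal_def PiE_iff fun_eq_iff extensional_def)

lemma neg_cont: "continuous_map (sphere_product ns) (sphere_product ns) (diag_antipodal ns)"
proof -
  have "continuous_map (sphere_product ns) (nsphere (ns!k)) (\<lambda>x. diag_antipodal ns x k)" if k: "k < length ns" for k
  proof (rule into_nsphere)
    show "continuous_map (sphere_product ns) (powertop_real UNIV) (\<lambda>x. diag_antipodal ns x k)"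
      unfolding continuous_map_componentwise_UNIV diag_antipodal_def using k
      by (auto intro!: continuous_map_minus coord)
    show "(\<lambda>x. diag_antipodal ns x k) \<in> topspace (sphere_product ns) \<rightarrow> topspace (nsphere (ns ! k))"
      using neg_in k by (auto simp: topspace_SP PiE_iff)
  qed
  then show ?thesis
    using continuous_map_componentwise[of "sphere_product ns" "\<lambda>k. nsphere (ns!k)" "{..<length ns}" "diag_antipodal ns"]
    by (auto simp: diag_antipodal_def sphere_product_def[symmetric])
qed

lemma q_eq:
  assumes "x \<in> topspace (sphere_product ns)" "y \<in> topspace (sphere_product ns)"
  shows "({x, diag_antipodal ns x} = {y, diag_antipodal ns y}) \<longleftrightarrow> (y = x \<or> y = diag_antipodal ns x)"
  using neg_neg[OF assms(1)] neg_neg[OF assms(2)] by (auto simp: doubleton_eq_iff)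

lemma open_img:
  assumes V: "openin (sphere_product ns) V"
  shows "openin (projective_product ns) ((\<lambda>x. {x, diag_antipodal ns x}) ` V)"
proof -
  let ?q = "\<lambda>x. {x, diag_antipodal ns x}"
  have Osub: "V \<subseteq> topspace (sphere_product ns)" using openin_subset[OF V] .
  have "{x \<in> topspace (sphere_product ns). ?q x \<in> ?q ` V} =
        V \<union> {x \<in> topspace (sphere_product ns). diag_antipodal ns x \<in> V}"
  proof (intro equalityI subsetI)
    fix x assume "x \<in> {x \<in> topspace (sphere_product ns). ?q x \<in> ?q ` V}"
    then obtain y where y: "y \<in> V" "?q x = ?q y" and x: "x \<in> topspace (sphere_product ns)" by auto
    then have "x = y \<or> x = diag_antipodal ns y" using q_eq[of y ns x] Osub by auto
    then show "x \<in> V \<union> {x \<in> topspace (sphere_product ns). diag_antipodal ns x \<in> V}"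
      using y x Osub neg_neg by auto
  next
    fix x assume "x \<in> V \<union> {x \<in> topspace (sphere_product ns). diag_antipodal ns x \<in> V}"
    then show "x \<in> {x \<in> topspace (sphere_product ns). ?q x \<in> ?q ` V}"
    proof
      assume "x \<in> V" then show ?thesis using Osub by auto
    next
      assume x: "x \<in> {x \<in> topspace (sphere_product ns). diag_antipodal ns x \<in> V}"
      then have "?q x = ?q (diag_antipodal ns x)" using neg_neg by auto
      then show ?thesis using x by auto
    qed
  qed
  moreover have "openin (sphere_product ns) (V \<union> {x \<in> topspace (sphere_product ns). diag_antipodal ns x \<in> V})"
    using V openin_continuous_map_preimage[OF neg_cont V] by (intro openin_Un) auto
  ultimately show ?thesis
    unfolding projective_product_def openin_quot using Osub by auto
qed

definition homP :: "nat list \<Rightarrow> (nat \<Rightarrow> nat \<Rightarrow> real) \<Rightarrow> real \<times> (nat \<Rightarrow> nat \<Rightarrow> real) \<Rightarrow> nat \<Rightarrow> nat \<Rightarrow> real" where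
  "homP ns c p = restrict (\<lambda>i. hom1 (ns!i) (c i) (fst p, snd p i)) {..<length ns}"

lemma cont_homP:
  assumes c: "\<And>i. i < length ns \<Longrightarrow> c i \<in> topspace (nsphere (ns!i))"
    and A: "A \<subseteq> {x. \<forall>i<length ns. x i \<noteq> - c i}"
  shows "continuous_map (prod_topology (top_of_set {0..1}) (subtopology (sphere_product ns) A)) (sphere_product ns) (homP ns c)"
proof -
  let ?Z = "prod_topology (top_of_set {0..1::real}) (subtopology (sphere_product ns) A)"
  have "continuous_map ?Z (nsphere (ns!i)) (\<lambda>p. homP ns c p i)" if i: "i < length ns" for i
  proof -
    have 1: "continuous_map ?Z (prod_topology (top_of_set {0..1}) (subtopology (nsphere (ns!i)) {y. y \<noteq> - c i})) (\<lambda>p. (fst p, snd p i))"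
    proof (intro continuous_map_pairedI continuous_map_fst)
      have "continuous_map ?Z (nsphere (ns!i)) (\<lambda>p. snd p i)"
        using continuous_map_compose[OF continuous_map_snd continuous_map_from_subtopology[OF continuous_map_product_projection[of i "{..<length ns}" "\<lambda>k. nsphere (ns!k)"]]] i
        by (simp add: o_def sphere_product_def)
      then show "continuous_map ?Z (subtopology (nsphere (ns!i)) {y. y \<noteq> - c i}) (\<lambda>p. snd p i)"
        using A i by (auto simp: continuous_map_in_subtopology topspace_prod_topology)
    qed
    have "continuous_map ?Z (nsphere (ns!i)) (hom1 (ns!i) (c i) \<circ> (\<lambda>p. (fst p, snd p i)))"
      by (rule continuous_map_compose[OF 1 cont_hom1[OF c[OF i]]]) auto
    then show ?thesis using i by (simp add: o_def homP_def)
  qed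
  then show ?thesis
    using continuous_map_componentwise[of ?Z "\<lambda>k. nsphere (ns!k)" "{..<length ns}" "homP ns c"]
    by (auto simp: homP_def sphere_product_def[symmetric])
qed

lemma homP_0: "x \<in> topspace (sphere_product ns) \<Longrightarrow> homP ns c (0,x) = x"
  by (auto simp: homP_def topspace_SP PiE_iff hom1_0 fun_eq_iff extensional_def)

lemma homP_1: "(\<And>i. i < length ns \<Longrightarrow> c i \<in> topspace (nsphere (ns!i))) \<Longrightarrow> homP ns c (1,x) = restrict c {..<length ns}"
  by (auto simp: homP_def hom1_1)

lemma sect_cont:
  assumes A: "openin X A" and inj: "inj_on f A"
    and opn: "\<And>V. openin X V \<Longrightarrow> V \<subseteq> A \<Longrightarrow> openin Y (f ` V)"
    and sub: "f ` A \<subseteq> topspace Y"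
  shows "continuous_map (subtopology Y (f ` A)) (subtopology X A) (inv_into A f)"
  unfolding continuous_map_def
proof (intro conjI allI impI)
  show "inv_into A f \<in> topspace (subtopology Y (f ` A)) \<rightarrow> topspace (subtopology X A)"
    using openin_subset[OF A] by (auto simp: inv_into_into)
  fix U assume "openin (subtopology X A) U"
  then obtain T where T: "openin X T" "U = T \<inter> A" by (auto simp: openin_subtopology)
  have U: "openin X U" using T A by auto
  have eq: "{y \<in> topspace (subtopology Y (f ` A)). inv_into A f y \<in> U} = f ` U"
    using sub T(2) inj by (auto simp: inv_into_f_f inv_into_into)
  show "openin (subtopology Y (f ` A)) {y \<in> topspace (subtopology Y (f ` A)). inv_into A f y \<in> U}"
    unfolding eq openin_subtopology
    using opn[OF U] T(2) by (intro exI[of _ "f ` U"]) auto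
qed

lemma contr:
  assumes A: "openin (sphere_product ns) A" and r: "ns \<noteq> []"
    and inj: "inj_on (\<lambda>x. {x, diag_antipodal ns x}) A"
    and c: "\<And>i. i < length ns \<Longrightarrow> c i \<in> topspace (nsphere (ns!i))"
    and Ac: "A \<subseteq> {x. \<forall>i<length ns. x i \<noteq> - c i}"
  shows "contractible_in (projective_product ns) ((\<lambda>x. {x, diag_antipodal ns x}) ` A)"
proof -
  let ?q = "\<lambda>x. {x, diag_antipodal ns x}"
  let ?P = "projective_product ns"
  let ?W = "?q ` A"
  let ?s = "inv_into A ?q"
  have Asub: "A \<subseteq> topspace (sphere_product ns)" using openin_subset[OF A] .
  have qc: "continuous_map (sphere_product ns) ?P ?q"
    unfolding projective_product_def by (rule cont_quot)
  have Wsub: "?W \<subseteq> topspace ?P" using Asub continuous_map_image_subset_topspace[OF qc] by auto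
  have sc: "continuous_map (subtopology ?P ?W) (subtopology (sphere_product ns) A) ?s"
    by (rule sect_cont[OF A inj _ Wsub]) (rule open_img)
  let ?h = "\<lambda>p. ?q (homP ns c (fst p, ?s (snd p)))"
  have hc: "continuous_map (prod_topology (top_of_set {0..1}) (subtopology ?P ?W)) ?P ?h"
  proof -
    have "continuous_map (prod_topology (top_of_set {0..1}) (subtopology ?P ?W))
            (prod_topology (top_of_set {0..1}) (subtopology (sphere_product ns) A)) (\<lambda>p. (fst p, ?s (snd p)))"
      by (intro continuous_map_pairedI continuous_map_fst continuous_map_compose[OF continuous_map_snd sc, unfolded o_def])
    then have "continuous_map (prod_topology (top_of_set {0..1}) (subtopology ?P ?W)) (sphere_product ns)
        (homP ns c \<circ> (\<lambda>p. (fst p, ?s (snd p))))"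
      by (rule continuous_map_compose[OF _ cont_homP[OF c Ac]])
    then have "continuous_map (prod_topology (top_of_set {0..1}) (subtopology ?P ?W)) ?P
        (?q \<circ> (homP ns c \<circ> (\<lambda>p. (fst p, ?s (snd p)))))"
      by (rule continuous_map_compose[OF _ qc])
    then show ?thesis by (simp add: o_def)
  qed
  have "homotopic_with (\<lambda>_. True) (subtopology ?P ?W) ?P id (\<lambda>_. ?q (restrict c {..<length ns}))"
    unfolding homotopic_with[where P="\<lambda>_. True", OF refl]
  proof (intro exI[of _ ?h] conjI ballI hc)
    fix y assume "y \<in> topspace (subtopology ?P ?W)"
    then have y: "y \<in> ?W" by auto
    then have sA: "?s y \<in> A" by (auto simp: inv_into_into)
    have e1: "homP ns c (0, ?s y) = ?s y" using sA Asub by (intro homP_0) auto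
    have e2: "?q (?s y) = y" by (rule f_inv_into_f[OF y])
    show "?h (0, y) = id y" using e1 e2 by simp
    show "?h (1, y) = ?q (restrict c {..<length ns})" by (simp add: homP_1 c)
  qed auto
  then show ?thesis unfolding contractible_in_def by blast
qed

definition ek :: "nat \<Rightarrow> nat \<Rightarrow> real" where "ek k = (\<lambda>l. if l = k then 1 else 0)"
definition pj :: "nat \<Rightarrow> nat \<Rightarrow> real" where
  "pj j = (\<lambda>l. if l = 0 then (1 - (real j)^2)/(1 + (real j)^2) else if l = 1 then 2*real j/(1+(real j)^2) else 0)"
definition cc :: "nat \<Rightarrow> nat \<Rightarrow> nat \<Rightarrow> nat \<Rightarrow> real" where "cc k j = (\<lambda>i. if i = 0 then ek k else pj j)"
definition AA :: "nat list \<Rightarrow> nat \<Rightarrow> nat \<Rightarrow> (nat \<Rightarrow> nat \<Rightarrow> real) set" where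
  "AA ns k j = {x \<in> topspace (sphere_product ns). 0 < x 0 k \<and> (\<forall>i<length ns. x i \<noteq> - cc k j i)}"

lemma ek_in: "k \<le> n \<Longrightarrow> ek k \<in> topspace (nsphere n)"
  by (simp add: topspace_nsphere ek_def if_distrib[where f="\<lambda>x. x^2"] cong: if_cong)

lemma pj_alg: "((1 - u^2) / (1 + u^2))^2 + ((2 * u) / (1 + u^2))^2 = (1::real)"
proof -
  have d: "1 + u^2 > 0" by (simp add: add_pos_nonneg)
  have "(1 - u^2)^2 + (2*u)^2 = (1+u^2)^2" by (simp add: power2_eq_square algebra_simps)
  then show ?thesis using d by (simp add: power_divide add_divide_distrib[symmetric])
qed

lemma pj_in: "1 \<le> n \<Longrightarrow> pj j \<in> topspace (nsphere n)"
proof -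
  assume n: "1 \<le> n"
  have "(\<Sum>l\<le>n. (pj j l)^2) = (\<Sum>l\<in>{0,1}. (pj j l)^2)"
    by (rule sum.mono_neutral_right) (use n in \<open>auto simp: pj_def\<close>)
  also have "\<dots> = 1" using pj_alg[of "real j"] by (simp add: pj_def)
  finally show ?thesis using n by (simp add: topspace_nsphere pj_def)
qed

lemma pj_inj: "pj a = pj b \<Longrightarrow> a = b"
proof -
  assume "pj a = pj b"
  then have "(1 - (real a)^2)/(1 + (real a)^2) = (1 - (real b)^2)/(1 + (real b)^2)"
    by (metis pj_def)
  then have "(1 - (real a)^2)*(1 + (real b)^2) = (1 - (real b)^2)*(1 + (real a)^2)"
  proof -
    have "1 + (real a)^2 \<noteq> 0" "1 + (real b)^2 \<noteq> 0" by (metis add_pos_nonneg zero_le_power2 zero_less_one less_irrefl)+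
    then show ?thesis using \<open>(1 - (real a)^2)/(1 + (real a)^2) = (1 - (real b)^2)/(1 + (real b)^2)\<close>
      by (simp add: frac_eq_eq)
  qed
  then have "(real a)^2 = (real b)^2" by (simp add: algebra_simps)
  then show "a = b" by (metis of_nat_eq_iff of_nat_0_le_iff power2_eq_iff_nonneg)
qed

lemma open_ne: "i < length ns \<Longrightarrow> openin (sphere_product ns) {x \<in> topspace (sphere_product ns). x i \<noteq> v}"
proof -
  assume i: "i < length ns"
  have "{x \<in> topspace (sphere_product ns). x i \<noteq> v} = (\<Union>l. {x \<in> topspace (sphere_product ns). x i l \<in> - {v l}})"
    by auto
  moreover have "openin (sphere_product ns) {x \<in> topspace (sphere_product ns). x i l \<in> - {v l}}" for l
    by (rule openin_continuous_map_preimage[OF coord[OF i]]) (metis closed_singleton open_Compl open_openin)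
  ultimately show ?thesis by auto
qed

lemma AA_open: "ns \<noteq> [] \<Longrightarrow> openin (sphere_product ns) (AA ns k j)"
proof -
  assume r: "ns \<noteq> []"
  have "AA ns k j = {x \<in> topspace (sphere_product ns). x 0 k \<in> {0<..}} \<inter>
     ((\<Inter>i\<in>{..<length ns}. {x \<in> topspace (sphere_product ns). x i \<noteq> - cc k j i}) \<inter> topspace (sphere_product ns))"
    by (auto simp: AA_def)
  moreover have "openin (sphere_product ns) {x \<in> topspace (sphere_product ns). x 0 k \<in> {0<..}}"
    by (rule openin_continuous_map_preimage[OF coord]) (use r in auto)
  moreover have "openin (sphere_product ns) ((\<Inter>i\<in>{..<length ns}. {x \<in> topspace (sphere_product ns). x i \<noteq> - cc k j i}) \<inter> topspace (sphere_product ns))"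
    by (rule openin_INT) (auto intro: open_ne)
  ultimately show ?thesis by auto
qed

lemma AA_inj: "ns \<noteq> [] \<Longrightarrow> inj_on (\<lambda>x. {x, diag_antipodal ns x}) (AA ns k j)"
proof (rule inj_onI)
  fix a b assume r: "ns \<noteq> []" and a: "a \<in> AA ns k j" and b: "b \<in> AA ns k j"
    and e: "{a, diag_antipodal ns a} = {b, diag_antipodal ns b}"
  then have "b = a \<or> b = diag_antipodal ns a" using q_eq[of a ns b] by (auto simp: AA_def)
  moreover have "diag_antipodal ns a 0 k = - a 0 k" using r by (simp add: diag_antipodal_def)
  ultimately show "a = b" using a b by (auto simp: AA_def)
qed

lemma cover:
  assumes r: "ns \<noteq> []" and y: "y \<in> topspace (projective_product ns)"
  shows "\<exists>k\<le>ns!0. \<exists>j<length ns. y \<in> (\<lambda>x. {x, diag_antipodal ns x}) ` AA ns k j"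
proof -
  let ?q = "\<lambda>x. {x, diag_antipodal ns x}"
  obtain x where x: "x \<in> topspace (sphere_product ns)" "y = ?q x"
    using y by (auto simp: projective_product_def topspace_quot)
  have x0: "x 0 \<in> topspace (nsphere (ns!0))" using x r by (auto simp: topspace_SP PiE_iff)
  obtain k where k: "k \<le> ns!0" "x 0 k \<noteq> 0"
  proof (rule ccontr)
    assume "\<not> thesis"
    then have "\<forall>k\<le>ns!0. x 0 k = 0" using that by blast
    then show False using x0 by (simp add: topspace_nsphere)
  qed
  define x' where "x' = (if 0 < x 0 k then x else diag_antipodal ns x)"
  have x'1: "x' \<in> topspace (sphere_product ns)" using x neg_in by (simp add: x'_def)
  have x'2: "?q x' = y" using x neg_neg[OF x(1)] by (auto simp: x'_def)
  have x'3: "0 < x' 0 k" using k r by (auto simp: x'_def diag_antipodal_def)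
  define g where "g i = (SOME j. x' i = - pj j)" for i
  have "\<exists>j<length ns. \<forall>i\<in>{1..<length ns}. x' i \<noteq> - pj j"
  proof (rule ccontr)
    assume "\<not> ?thesis"
    then have bad: "\<forall>j<length ns. \<exists>i\<in>{1..<length ns}. x' i = - pj j" by blast
    have "{..<length ns} \<subseteq> g ` {1..<length ns}"
    proof
      fix j assume "j \<in> {..<length ns}"
      then obtain i where i: "i \<in> {1..<length ns}" "x' i = - pj j" using bad by auto
      have gi: "x' i = - pj (g i)" unfolding g_def using i(2) by (rule someI)
      have "- pj (g i) = - pj j" using gi i(2) by simp
      then have "pj (g i) = pj j" by (simp add: fun_eq_iff)
      then have "g i = j" by (rule pj_inj)
      then show "j \<in> g ` {1..<length ns}" using i by blast
    qed
    then have "card {..<length ns} \<le> card (g ` {1..<length ns})" by (intro card_mono) auto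
    also have "\<dots> \<le> card {1..<length ns}" by (rule card_image_le) auto
    finally show False using r by (cases ns) auto
  qed
  then obtain j where j: "j < length ns" "\<forall>i\<in>{1..<length ns}. x' i \<noteq> - pj j" by blast
  have "x' \<in> AA ns k j"
    unfolding AA_def
  proof (intro CollectI conjI allI impI x'1 x'3)
    fix i assume i: "i < length ns"
    show "x' i \<noteq> - cc k j i"
    proof (cases "i = 0")
      case True then show ?thesis using x'3 by (auto simp: cc_def ek_def fun_eq_iff intro!: exI[of _ k])
    next
      case False then show ?thesis using j i by (auto simp: cc_def)
    qed
  qed
  then show ?thesis using k(1) j(1) x'2 by blast
qed

theorem mainTheorem13:
  fixes ns :: "nat list"
  assumes "ns \<noteq> []"
    and "sorted ns"
    and "1 \<le> hd ns"
  shows "LS_cat (projective_product ns) < enat ((hd ns + 1) * length ns)"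
proof -
  let ?q = "\<lambda>x. {x, diag_antipodal ns x}"
  let ?r = "length ns"
  let ?K = "(hd ns + 1) * length ns - 1"
  have r: "0 < ?r" using assms(1) by simp
  have hd: "hd ns = ns ! 0" using assms(1) by (simp add: hd_conv_nth)
  have ge1: "1 \<le> ns ! i" if "i < ?r" for i
    using sorted_nth_mono[OF assms(2), of 0 i] that assms(3) hd by simp
  define U where "U idx = ?q ` AA ns (idx div ?r) (idx mod ?r)" for idx
  have "LS_cover (projective_product ns) ?K"
    unfolding LS_cover_def
  proof (intro exI[of _ U] conjI allI impI)
    fix idx assume idx: "idx \<le> ?K"
    have k: "idx div ?r \<le> ns ! 0"
    proof -
      have "idx < (hd ns + 1) * ?r" using idx r by (metis Suc_le_lessD le_diff_conv2 Suc_leI mult_pos_pos zero_less_Suc plus_1_eq_Suc add.commute nat_mult_1 Suc_eq_plus1 le_add1 less_imp_le_nat diff_less less_one order.strict_trans1 zero_less_one)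
      then have "idx div ?r < hd ns + 1" by (simp add: less_mult_imp_div_less)
      then show ?thesis using hd by simp
    qed
    show "openin (projective_product ns) (U idx)"
      unfolding U_def by (rule open_img[OF AA_open[OF assms(1)]])
    show "contractible_in (projective_product ns) (U idx)"
      unfolding U_def
    proof (rule contr[OF AA_open[OF assms(1)] assms(1) AA_inj[OF assms(1)]])
      fix i assume i: "i < ?r"
      show "cc (idx div ?r) (idx mod ?r) i \<in> topspace (nsphere (ns ! i))"
      proof (cases "i = 0")
        case True then show ?thesis using k by (simp add: cc_def ek_in)
      next
        case False then show ?thesis using ge1[OF i] by (simp add: cc_def pj_in)
      qed
    next
      show "AA ns (idx div ?r) (idx mod ?r) \<subseteq> {x. \<forall>i<?r. x i \<noteq> - cc (idx div ?r) (idx mod ?r) i}"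
        by (auto simp: AA_def)
    qed
  next
    show "topspace (projective_product ns) \<subseteq> (\<Union>i\<le>?K. U i)"
    proof
      fix y assume "y \<in> topspace (projective_product ns)"
      then obtain k j where kj: "k \<le> ns!0" "j < ?r" "y \<in> ?q ` AA ns k j"
        using cover[OF assms(1)] by blast
      define idx where "idx = k * ?r + j"
      have "idx div ?r = k" "idx mod ?r = j" using kj(2) r by (simp_all add: idx_def)
      then have "y \<in> U idx" using kj(3) by (simp add: U_def)
      moreover have "idx \<le> ?K"
      proof -
        have "k * ?r \<le> hd ns * ?r" using kj(1) hd by simp
        moreover have "(hd ns + 1) * ?r = hd ns * ?r + ?r" by simp
        ultimately show ?thesis using kj(2) unfolding idx_def by arith
      qed
      ultimately show "y \<in> (\<Union>i\<le>?K. U i)" by blast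
    qed
  qed
  then have "(LEAST k. LS_cover (projective_product ns) k) \<le> ?K" by (rule Least_le)
  moreover have "?K < (hd ns + 1) * length ns" using r by simp
  ultimately show ?thesis
    using \<open>LS_cover (projective_product ns) ?K\<close> unfolding LS_cat_def by auto
qed

end
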